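(* Let $\mathcal C$ be an $R$-coring satisfying the left $\alpha$-condition. (i) If $M$ is a left $\mathcal C$-comodule that is finitely generated and projective as a left $R$-module, then ${}^*M$ is a rational right ${}^*\mathcal C$-module. (ii) Suppose $\mathcal C=M\oplus N$ as left $\mathcal C$-comodules. Then ${}^*M$ is a rational right ${}^*\mathcal C$-module if and only if $M$ is finitely generated as a left $R$-module.
   Context: An $R$-coring is a triple $(\mathcal C,\Delta,\varepsilon)$ with $\mathcal C$ an $R$-bimodule and $\Delta:\mathcal C\to\mathcal C\otimes_R\mathcal C$, $\varepsilon:\mathcal C\to R$ coassociative and counital $R$-bimodule maps; write $\Delta(c)=c_{(1)}\otimes_R c_{(2)}$. ${}^*\mathcal C={}_R\mathrm{Hom}(\mathcal C,R)$ is a ring with product $(f\#g)(c)=g(c_{(1)}f(c_{(2)}))$ and unit $\varepsilon$. $\mathcal C$ satisfies the left $\alpha$-condition if it is locally projective as a left $R$-module. A left $\mathcal C$-comodule is a left $R$-module $M$ with a coassociative counital left $R$-linear map $M\to\mathcal C\otimes_R M$, $m\mapsto m_{[-1]}\otimes m_{[0]}$. For a left comodule $M$, ${}^*M={}_R\mathrm{Hom}(M,R)$ is a right ${}^*\mathcal C$-module via $(h\cdot f)(m)=f(m_{[-1]}h(m_{[0]}))$. A right ${}^*\mathcal C$-module $X$ is rational if for every $x\in X$ there is $\sum_i x_i\otimes c_i\in X\otimes_R\mathcal C$ with $x\cdot f=\sum_i x_if(c_i)$ for all $f\in{}^*\mathcal C$. *)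

theory Defs
  imports "HOL-Library.Function_Algebras"
begin

definition lmod :: "('r::ring_1 \<Rightarrow> 'm::ab_group_add \<Rightarrow> 'm) \<Rightarrow> bool" where
  "lmod lm \<longleftrightarrow> (\<forall>r s x y. lm r (x + y) = lm r x + lm r y \<and> lm (r + s) x = lm r x + lm s x
      \<and> lm (r * s) x = lm r (lm s x) \<and> lm 1 x = x)"

definition rmod :: "('m::ab_group_add \<Rightarrow> 'r::ring_1 \<Rightarrow> 'm) \<Rightarrow> bool" where
  "rmod rm \<longleftrightarrow> (\<forall>r s x y. rm (x + y) r = rm x r + rm y r \<and> rm x (r + s) = rm x r + rm x s
      \<and> rm x (r * s) = rm (rm x r) s \<and> rm x 1 = x)"

definition bimod :: "('r::ring_1 \<Rightarrow> 'm::ab_group_add \<Rightarrow> 'm) \<Rightarrow> ('m \<Rightarrow> 'r \<Rightarrow> 'm) \<Rightarrow> bool" where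
  "bimod lm rm \<longleftrightarrow> lmod lm \<and> rmod rm \<and> (\<forall>r s x. lm r (rm x s) = rm (lm r x) s)"

definition delta :: "'p \<Rightarrow> 'p \<Rightarrow> int" where
  "delta p = (\<lambda>q. if q = p then 1 else 0)"

text \<open>A formal sum of simple tensors, represented as a list, as an element of the free abelian group.\<close>
definition fsum :: "'p list \<Rightarrow> 'p \<Rightarrow> int" where
  "fsum xs = (\<lambda>q. \<Sum>p\<leftarrow>xs. delta p q)"

text \<open>Kernel of the free abelian group on A x B onto A tensor_R B (A right, B left R-module).\<close>
inductive_set tker :: "('a::ab_group_add \<Rightarrow> 'r::ring_1 \<Rightarrow> 'a) \<Rightarrow> ('r \<Rightarrow> 'b::ab_group_add \<Rightarrow> 'b)
    \<Rightarrow> ('a \<times> 'b \<Rightarrow> int) set"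
  for ra lb where
  tk_zero: "(\<lambda>_. 0) \<in> tker ra lb"
| tk_addl: "(\<lambda>q. delta (a + a', b) q - delta (a, b) q - delta (a', b) q) \<in> tker ra lb"
| tk_addr: "(\<lambda>q. delta (a, b + b') q - delta (a, b) q - delta (a, b') q) \<in> tker ra lb"
| tk_bal: "(\<lambda>q. delta (ra a r, b) q - delta (a, lb r b) q) \<in> tker ra lb"
| tk_diff: "x \<in> tker ra lb \<Longrightarrow> y \<in> tker ra lb \<Longrightarrow> (\<lambda>q. x q - y q) \<in> tker ra lb"

text \<open>Equality in A tensor_R B of two formal sums.\<close>
definition teq :: "('a::ab_group_add \<Rightarrow> 'r::ring_1 \<Rightarrow> 'a) \<Rightarrow> ('r \<Rightarrow> 'b::ab_group_add \<Rightarrow> 'b)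
    \<Rightarrow> ('a \<times> 'b) list \<Rightarrow> ('a \<times> 'b) list \<Rightarrow> bool" where
  "teq ra lb xs ys \<longleftrightarrow> (\<lambda>q. fsum xs q - fsum ys q) \<in> tker ra lb"

text \<open>Kernel for the triple tensor product A tensor_R B tensor_R D
  (A right module, B bimodule, D left module).\<close>
inductive_set tker3 :: "('a::ab_group_add \<Rightarrow> 'r::ring_1 \<Rightarrow> 'a) \<Rightarrow> ('r \<Rightarrow> 'b::ab_group_add \<Rightarrow> 'b)
    \<Rightarrow> ('b \<Rightarrow> 'r \<Rightarrow> 'b) \<Rightarrow> ('r \<Rightarrow> 'd::ab_group_add \<Rightarrow> 'd) \<Rightarrow> ('a \<times> 'b \<times> 'd \<Rightarrow> int) set"
  for ra lb rb ld where
  tk3_zero: "(\<lambda>_. 0) \<in> tker3 ra lb rb ld"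
| tk3_add1: "(\<lambda>q. delta (a + a', b, d) q - delta (a, b, d) q - delta (a', b, d) q) \<in> tker3 ra lb rb ld"
| tk3_add2: "(\<lambda>q. delta (a, b + b', d) q - delta (a, b, d) q - delta (a, b', d) q) \<in> tker3 ra lb rb ld"
| tk3_add3: "(\<lambda>q. delta (a, b, d + d') q - delta (a, b, d) q - delta (a, b, d') q) \<in> tker3 ra lb rb ld"
| tk3_bal1: "(\<lambda>q. delta (ra a r, b, d) q - delta (a, lb r b, d) q) \<in> tker3 ra lb rb ld"
| tk3_bal2: "(\<lambda>q. delta (a, rb b r, d) q - delta (a, b, ld r d) q) \<in> tker3 ra lb rb ld"
| tk3_diff: "x \<in> tker3 ra lb rb ld \<Longrightarrow> y \<in> tker3 ra lb rb ld \<Longrightarrow> (\<lambda>q. x q - y q) \<in> tker3 ra lb rb ld"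

definition teq3 :: "('a::ab_group_add \<Rightarrow> 'r::ring_1 \<Rightarrow> 'a) \<Rightarrow> ('r \<Rightarrow> 'b::ab_group_add \<Rightarrow> 'b)
    \<Rightarrow> ('b \<Rightarrow> 'r \<Rightarrow> 'b) \<Rightarrow> ('r \<Rightarrow> 'd::ab_group_add \<Rightarrow> 'd)
    \<Rightarrow> ('a \<times> 'b \<times> 'd) list \<Rightarrow> ('a \<times> 'b \<times> 'd) list \<Rightarrow> bool" where
  "teq3 ra lb rb ld xs ys \<longleftrightarrow> (\<lambda>q. fsum xs q - fsum ys q) \<in> tker3 ra lb rb ld"

text \<open>An R-coring on the bimodule (C, lc, rc): comultiplication Delta (each Delta c is a
  representative in C tensor_R C) and counit eps.\<close>
definition coring :: "('r::ring_1 \<Rightarrow> 'c::ab_group_add \<Rightarrow> 'c) \<Rightarrow> ('c \<Rightarrow> 'r \<Rightarrow> 'c)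
    \<Rightarrow> ('c \<Rightarrow> ('c \<times> 'c) list) \<Rightarrow> ('c \<Rightarrow> 'r) \<Rightarrow> bool" where
  "coring lc rc Delta eps \<longleftrightarrow> bimod lc rc
    \<and> (\<forall>x y. teq rc lc (Delta (x + y)) (Delta x @ Delta y))
    \<and> (\<forall>r x. teq rc lc (Delta (lc r x)) (map (\<lambda>(a, b). (lc r a, b)) (Delta x)))
    \<and> (\<forall>r x. teq rc lc (Delta (rc x r)) (map (\<lambda>(a, b). (a, rc b r)) (Delta x)))
    \<and> (\<forall>x y. eps (x + y) = eps x + eps y)
    \<and> (\<forall>r x. eps (lc r x) = r * eps x)
    \<and> (\<forall>r x. eps (rc x r) = eps x * r)
    \<and> (\<forall>x. teq3 rc lc rc lc
          (concat (map (\<lambda>(a, b). map (\<lambda>(u, v). (u, v, b)) (Delta a)) (Delta x)))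
          (concat (map (\<lambda>(a, b). map (\<lambda>(u, v). (a, u, v)) (Delta b)) (Delta x))))
    \<and> (\<forall>x. (\<Sum>(a, b)\<leftarrow>Delta x. lc (eps a) b) = x)
    \<and> (\<forall>x. (\<Sum>(a, b)\<leftarrow>Delta x. rc a (eps b)) = x)"

text \<open>A left comodule (M, lm) with coaction rho (each rho m a representative in C tensor_R M).\<close>
definition left_comodule :: "('r::ring_1 \<Rightarrow> 'c::ab_group_add \<Rightarrow> 'c) \<Rightarrow> ('c \<Rightarrow> 'r \<Rightarrow> 'c)
    \<Rightarrow> ('c \<Rightarrow> ('c \<times> 'c) list) \<Rightarrow> ('c \<Rightarrow> 'r)
    \<Rightarrow> ('r \<Rightarrow> 'm::ab_group_add \<Rightarrow> 'm) \<Rightarrow> ('m \<Rightarrow> ('c \<times> 'm) list) \<Rightarrow> bool" where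
  "left_comodule lc rc Delta eps lm rho \<longleftrightarrow> lmod lm
    \<and> (\<forall>x y. teq rc lm (rho (x + y)) (rho x @ rho y))
    \<and> (\<forall>r x. teq rc lm (rho (lm r x)) (map (\<lambda>(c, m). (lc r c, m)) (rho x)))
    \<and> (\<forall>x. teq3 rc lc rc lm
          (concat (map (\<lambda>(c, m). map (\<lambda>(u, v). (u, v, m)) (Delta c)) (rho x)))
          (concat (map (\<lambda>(c, m). map (\<lambda>(u, v). (c, u, v)) (rho m)) (rho x))))
    \<and> (\<forall>x. (\<Sum>(c, m)\<leftarrow>rho x. lm (eps c) m) = x)"

definition comodule_map_to_C :: "('r::ring_1 \<Rightarrow> 'c::ab_group_add \<Rightarrow> 'c) \<Rightarrow> ('c \<Rightarrow> 'r \<Rightarrow> 'c)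
    \<Rightarrow> ('c \<Rightarrow> ('c \<times> 'c) list) \<Rightarrow> ('r \<Rightarrow> 'm::ab_group_add \<Rightarrow> 'm) \<Rightarrow> ('m \<Rightarrow> ('c \<times> 'm) list)
    \<Rightarrow> ('m \<Rightarrow> 'c) \<Rightarrow> bool" where
  "comodule_map_to_C lc rc Delta lm rho g \<longleftrightarrow>
     (\<forall>x y. g (x + y) = g x + g y) \<and> (\<forall>r x. g (lm r x) = lc r (g x))
     \<and> (\<forall>x. teq rc lc (Delta (g x)) (map (\<lambda>(c, m). (c, g m)) (rho x)))"

text \<open>*M = Hom_R(M, R) for a left R-module M.\<close>
definition ldual :: "('r::ring_1 \<Rightarrow> 'm::ab_group_add \<Rightarrow> 'm) \<Rightarrow> ('m \<Rightarrow> 'r) set" where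
  "ldual lm = {h. (\<forall>x y. h (x + y) = h x + h y) \<and> (\<forall>r x. h (lm r x) = r * h x)}"

text \<open>Right *C-action on *M: (h . f)(m) = f(m_[-1] h(m_[0])).\<close>
definition dual_act :: "('c \<Rightarrow> 'r::ring_1 \<Rightarrow> 'c) \<Rightarrow> ('m \<Rightarrow> ('c \<times> 'm) list)
    \<Rightarrow> ('m \<Rightarrow> 'r) \<Rightarrow> ('c \<Rightarrow> 'r) \<Rightarrow> ('m \<Rightarrow> 'r)" where
  "dual_act rc rho h f = (\<lambda>m. \<Sum>(c, n)\<leftarrow>rho m. f (rc c (h n)))"

definition dual_ract :: "('m \<Rightarrow> 'r::ring_1) \<Rightarrow> 'r \<Rightarrow> ('m \<Rightarrow> 'r)" where
  "dual_ract h r = (\<lambda>m. h m * r)"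

text \<open>Rational right *C-module X (with right R-action ract): every x has some
  sum_i x_i tensor c_i in X tensor_R C with x.f = sum_i x_i f(c_i) for all f in *C.\<close>
definition rational :: "'x::monoid_add set \<Rightarrow> ('x \<Rightarrow> ('c \<Rightarrow> 'r) \<Rightarrow> 'x) \<Rightarrow> ('x \<Rightarrow> 'r \<Rightarrow> 'x)
    \<Rightarrow> ('c \<Rightarrow> 'r) set \<Rightarrow> bool" where
  "rational X act ract Cstar \<longleftrightarrow>
     (\<forall>x\<in>X. \<exists>xs. set xs \<subseteq> X \<times> UNIV \<and> (\<forall>f\<in>Cstar. act x f = (\<Sum>(y, c)\<leftarrow>xs. ract y (f c))))"

definition fin_gen :: "('r::ring_1 \<Rightarrow> 'm::ab_group_add \<Rightarrow> 'm) \<Rightarrow> bool" where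
  "fin_gen lm \<longleftrightarrow> (\<exists>es. \<forall>x. \<exists>rs. length rs = length es \<and> x = (\<Sum>(r, e)\<leftarrow>zip rs es. lm r e))"

text \<open>Finitely generated projective (dual basis lemma).\<close>
definition fg_projective :: "('r::ring_1 \<Rightarrow> 'm::ab_group_add \<Rightarrow> 'm) \<Rightarrow> bool" where
  "fg_projective lm \<longleftrightarrow> (\<exists>ps. (\<forall>(e, f)\<in>set ps. f \<in> ldual lm)
      \<and> (\<forall>x. x = (\<Sum>(e, f)\<leftarrow>ps. lm (f x) e)))"

text \<open>Locally projective (Zimmermann-Huisgen; finite dual-basis characterization).\<close>
definition locally_projective :: "('r::ring_1 \<Rightarrow> 'm::ab_group_add \<Rightarrow> 'm) \<Rightarrow> bool" where
  "locally_projective lm \<longleftrightarrow> (\<forall>F. finite F \<longrightarrow> (\<exists>ps. (\<forall>(e, f)\<in>set ps. f \<in> ldual lm)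
      \<and> (\<forall>x\<in>F. x = (\<Sum>(e, f)\<leftarrow>ps. lm (f x) e))))"

end

theory Submission
  imports Defs
begin


lemma additive_zero:
  fixes F :: "'a::ab_group_add \<Rightarrow> 'b::ab_group_add"
  assumes "\<And>x y. F (x+y) = F x + F y" shows "F 0 = 0"
  using assms[of 0 0] by simp

lemma additive_minus:
  fixes F :: "'a::ab_group_add \<Rightarrow> 'b::ab_group_add"
  assumes "\<And>x y. F (x+y) = F x + F y" shows "F (x - y) = F x - F y"
  using assms[of "x - y" y] by (simp add: algebra_simps)

lemma sum_list_hom:
  fixes F :: "'a::ab_group_add \<Rightarrow> 'b::ab_group_add"
  assumes "\<And>x y. F (x+y) = F x + F y"
  shows "F (sum_list (map g l)) = sum_list (map (\<lambda>x. F (g x)) l)"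
  by (induction l) (simp_all add: assms additive_zero[OF assms])

lemma sum_delta:
  assumes "finite S" "p \<in> S"
  shows "(\<Sum>q\<in>S. of_int (delta p q) * g q) = (g p :: 'v::ring_1)"
proof -
  have "(\<Sum>q\<in>S. of_int (delta p q) * g q) = (\<Sum>q\<in>S. if q = p then g q else 0)"
    by (rule sum.cong) (auto simp: delta_def)
  also have "\<dots> = g p" using assms by (simp add: sum.delta')
  finally show ?thesis .
qed

lemma sum_fsum:
  assumes "finite S" "set xs \<subseteq> S"
  shows "(\<Sum>q\<in>S. of_int (fsum xs q) * g q) = (\<Sum>p\<leftarrow>xs. (g p :: 'v::ring_1))"
  using assms(2)
proof (induction xs)
  case Nil
  then show ?case by (simp add: fsum_def)
next
  case (Cons x xs)
  have "(\<Sum>q\<in>S. of_int (fsum (x#xs) q) * g q)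
      = (\<Sum>q\<in>S. of_int (delta x q) * g q) + (\<Sum>q\<in>S. of_int (fsum xs q) * g q)"
    by (simp add: fsum_def distrib_right sum.distrib)
  also have "\<dots> = g x + (\<Sum>p\<leftarrow>xs. g p)"
    using Cons assms(1) by (simp add: sum_delta)
  finally show ?case by simp
qed

lemma sum_diff3:
  fixes g :: "_ \<Rightarrow> 'v::ring_1"
  shows "(\<Sum>q\<in>S. of_int (a q - b q - c q) * g q)
    = (\<Sum>q\<in>S. of_int (a q) * g q) - (\<Sum>q\<in>S. of_int (b q) * g q) - (\<Sum>q\<in>S. of_int (c q) * g q)"
  by (simp add: left_diff_distrib sum_subtractf)

lemma sum_diff2:
  fixes g :: "_ \<Rightarrow> 'v::ring_1"
  shows "(\<Sum>q\<in>S. of_int (a q - b q) * g q)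
    = (\<Sum>q\<in>S. of_int (a q) * g q) - (\<Sum>q\<in>S. of_int (b q) * g q)"
  by (simp add: left_diff_distrib sum_subtractf)

lemma tker_zero:
  fixes \<phi> :: "'a::ab_group_add \<times> 'b::ab_group_add \<Rightarrow> 'v::ring_1"
  assumes "k \<in> tker ra lb"
    and A1: "\<And>a a' b. \<phi> (a+a', b) = \<phi> (a,b) + \<phi> (a',b)"
    and A2: "\<And>a b b'. \<phi> (a, b+b') = \<phi> (a,b) + \<phi> (a,b')"
    and A3: "\<And>a r b. \<phi> (ra a r, b) = \<phi> (a, lb r b)"
  shows "\<exists>T. finite T \<and> {q. k q \<noteq> 0} \<subseteq> T \<and>
     (\<forall>S. finite S \<longrightarrow> T \<subseteq> S \<longrightarrow> (\<Sum>q\<in>S. of_int (k q) * \<phi> q) = 0)"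
  using assms(1)
proof (induction rule: tker.induct)
  case tk_zero
  then show ?case by (intro exI[of _ "{}"]) auto
next
  case (tk_addl a a' b)
  show ?case
  proof (rule exI[of _ "{(a+a',b),(a,b),(a',b)}"], intro conjI allI impI)
    fix S :: "('a \<times> 'b) set" assume "finite S" "{(a+a',b),(a,b),(a',b)} \<subseteq> S"
    then show "(\<Sum>q\<in>S. of_int (delta (a + a', b) q - delta (a, b) q - delta (a', b) q) * \<phi> q) = 0"
      by (simp only: sum_diff3) (simp add: sum_delta A1)
  qed (auto simp: delta_def)
next
  case (tk_addr a b b')
  show ?case
  proof (rule exI[of _ "{(a,b+b'),(a,b),(a,b')}"], intro conjI allI impI)
    fix S :: "('a \<times> 'b) set" assume "finite S" "{(a,b+b'),(a,b),(a,b')} \<subseteq> S"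
    then show "(\<Sum>q\<in>S. of_int (delta (a, b + b') q - delta (a, b) q - delta (a, b') q) * \<phi> q) = 0"
      by (simp only: sum_diff3) (simp add: sum_delta A2)
  qed (auto simp: delta_def)
next
  case (tk_bal a r b)
  show ?case
  proof (rule exI[of _ "{(ra a r,b),(a,lb r b)}"], intro conjI allI impI)
    fix S :: "('a \<times> 'b) set" assume "finite S" "{(ra a r,b),(a,lb r b)} \<subseteq> S"
    then show "(\<Sum>q\<in>S. of_int (delta (ra a r, b) q - delta (a, lb r b) q) * \<phi> q) = 0"
      by (simp only: sum_diff2) (simp add: sum_delta A3)
  qed (auto simp: delta_def)
next
  case (tk_diff x y)
  then obtain Tx Ty where Tx: "finite Tx" "{q. x q \<noteq> 0} \<subseteq> Tx"
     "\<forall>S. finite S \<longrightarrow> Tx \<subseteq> S \<longrightarrow> (\<Sum>q\<in>S. of_int (x q) * \<phi> q) = 0"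
     and Ty: "finite Ty" "{q. y q \<noteq> 0} \<subseteq> Ty"
     "\<forall>S. finite S \<longrightarrow> Ty \<subseteq> S \<longrightarrow> (\<Sum>q\<in>S. of_int (y q) * \<phi> q) = 0" by blast
  then show ?case
  proof (intro exI[of _ "Tx \<union> Ty"] conjI allI impI)
    fix S :: "('a \<times> 'b) set" assume "finite S" "Tx \<union> Ty \<subseteq> S"
    with Tx Ty show "(\<Sum>q\<in>S. of_int (x q - y q) * \<phi> q) = 0"
      by (simp only: sum_diff2) simp
  next
    show "{q. x q - y q \<noteq> 0} \<subseteq> Tx \<union> Ty" using Tx(2) Ty(2) by force
  qed (use Tx Ty in auto)
qed

lemma teq_sum:
  fixes \<phi> :: "'a::ab_group_add \<times> 'b::ab_group_add \<Rightarrow> 'v::ring_1"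
  assumes "teq ra lb xs ys"
    and A1: "\<And>a a' b. \<phi> (a+a', b) = \<phi> (a,b) + \<phi> (a',b)"
    and A2: "\<And>a b b'. \<phi> (a, b+b') = \<phi> (a,b) + \<phi> (a,b')"
    and A3: "\<And>a r b. \<phi> (ra a r, b) = \<phi> (a, lb r b)"
  shows "(\<Sum>p\<leftarrow>xs. \<phi> p) = (\<Sum>p\<leftarrow>ys. \<phi> p)"
proof -
  from tker_zero[OF assms(1)[unfolded teq_def] A1 A2 A3] obtain T where
    T: "finite T" "\<forall>S. finite S \<longrightarrow> T \<subseteq> S \<longrightarrow>
       (\<Sum>q\<in>S. of_int (fsum xs q - fsum ys q) * \<phi> q) = 0" by blast
  let ?S = "T \<union> set xs \<union> set ys"
  have "0 = (\<Sum>q\<in>?S. of_int (fsum xs q - fsum ys q) * \<phi> q)"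
    by (rule T(2)[rule_format, symmetric]) (auto simp: T(1))
  also have "\<dots> = (\<Sum>p\<leftarrow>xs. \<phi> p) - (\<Sum>p\<leftarrow>ys. \<phi> p)"
  proof -
    have h1: "(\<Sum>q\<in>?S. of_int (fsum xs q) * \<phi> q) = (\<Sum>p\<leftarrow>xs. \<phi> p)"
      by (rule sum_fsum) (auto simp: T(1))
    have h2: "(\<Sum>q\<in>?S. of_int (fsum ys q) * \<phi> q) = (\<Sum>p\<leftarrow>ys. \<phi> p)"
      by (rule sum_fsum) (auto simp: T(1))
    show ?thesis by (simp only: sum_diff2 h1 h2)
  qed
  finally show ?thesis by simp
qed

lemma sum_list_fun_apply:
  "(sum_list (map F l) :: 'a \<Rightarrow> 'b::monoid_add) m = sum_list (map (\<lambda>x. F x m) l)"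
  by (induction l) (simp_all add: plus_fun_def zero_fun_def)

lemma lin_sum:
  fixes \<Psi> :: "'m::ab_group_add \<Rightarrow> 'r::ring_1"
  assumes add: "\<And>x y. \<Psi> (x+y) = \<Psi> x + \<Psi> y" and lin: "\<And>r x. \<Psi> (lm r x) = r * \<Psi> x"
  shows "\<Psi> (\<Sum>(e,g)\<leftarrow>ps. lm (g m) e) = (\<Sum>(e,g)\<leftarrow>ps. g m * \<Psi> e)"
  by (induction ps) (auto simp: add lin additive_zero[OF add])

lemma part_i:
  fixes lc :: "'r::ring_1 \<Rightarrow> 'c::ab_group_add \<Rightarrow> 'c" and lm :: "'r \<Rightarrow> 'm::ab_group_add \<Rightarrow> 'm"
  assumes cor: "coring lc rc Delta eps" and com: "left_comodule lc rc Delta eps lm rho"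
    and fg: "fg_projective lm"
  shows "rational (ldual lm) (dual_act rc rho) dual_ract (ldual lc)"
proof -
  have bim: "bimod lc rc" using cor by (simp add: coring_def)
  have rmc: "rmod rc" and comm: "\<And>r s x. lc r (rc x s) = rc (lc r x) s"
    using bim by (auto simp: bimod_def)
  have rc_add1: "\<And>x y r. rc (x + y) r = rc x r + rc y r"
    and rc_add2: "\<And>x r s. rc x (r + s) = rc x r + rc x s"
    and rc_mult: "\<And>x r s. rc x (r * s) = rc (rc x r) s" using rmc by (auto simp: rmod_def)
  have rho_add: "\<And>x y. teq rc lm (rho (x+y)) (rho x @ rho y)"
    and rho_lin: "\<And>r x. teq rc lm (rho (lm r x)) (map (\<lambda>(c,m). (lc r c, m)) (rho x))"
    using com by (auto simp: left_comodule_def)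
  obtain ps where ps: "\<forall>(e,f)\<in>set ps. f \<in> ldual lm" "\<forall>x. x = (\<Sum>(e,f)\<leftarrow>ps. lm (f x) e)"
    using fg unfolding fg_projective_def by blast
  show ?thesis unfolding rational_def
  proof
    fix h assume h: "h \<in> ldual lm"
    have h_add: "\<And>x y. h (x+y) = h x + h y" and h_lin: "\<And>r x. h (lm r x) = r * h x"
      using h by (auto simp: ldual_def)
    define cs where "cs e = (\<Sum>(c,n)\<leftarrow>rho e. rc c (h n))" for e
    define xs where "xs = map (\<lambda>(e,g). (g, cs e)) ps"
    show "\<exists>xs. set xs \<subseteq> ldual lm \<times> UNIV \<and>
      (\<forall>f\<in>ldual lc. dual_act rc rho h f = (\<Sum>(y, c)\<leftarrow>xs. dual_ract y (f c)))"
    proof (intro exI[of _ xs] conjI ballI)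
      show "set xs \<subseteq> ldual lm \<times> UNIV" using ps(1) by (auto simp: xs_def)
      fix f assume f: "f \<in> ldual lc"
      have f_add: "\<And>x y. f (x+y) = f x + f y" and f_lin: "\<And>r x. f (lc r x) = r * f x"
        using f by (auto simp: ldual_def)
      define \<phi> where "\<phi> = (\<lambda>(c,n). f (rc c (h n)))"
      define \<Psi> where "\<Psi> m = (\<Sum>p\<leftarrow>rho m. \<phi> p)" for m
      have A1: "\<And>a a' b. \<phi> (a+a', b) = \<phi> (a,b) + \<phi> (a',b)"
        by (simp add: \<phi>_def rc_add1 f_add)
      have A2: "\<And>a b b'. \<phi> (a, b+b') = \<phi> (a,b) + \<phi> (a,b')"
        by (simp add: \<phi>_def rc_add2 f_add h_add)
      have A3: "\<And>a r b. \<phi> (rc a r, b) = \<phi> (a, lm r b)"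
        by (simp add: \<phi>_def rc_mult h_lin)
      have Padd: "\<Psi> (x+y) = \<Psi> x + \<Psi> y" for x y
        unfolding \<Psi>_def using teq_sum[OF rho_add A1 A2 A3] by simp
      have ml: "sum_list (map \<phi> (map (\<lambda>(c,m). (lc r c, m)) l)) = r * sum_list (map \<phi> l)" for r l
        by (induction l) (auto simp: \<phi>_def comm[symmetric] f_lin distrib_left)
      have Plin: "\<Psi> (lm r x) = r * \<Psi> x" for r x
        unfolding \<Psi>_def using teq_sum[OF rho_lin A1 A2 A3] ml by simp
      have Pcs: "\<Psi> e = f (cs e)" for e
        unfolding \<Psi>_def cs_def \<phi>_def by (simp add: sum_list_hom[OF f_add] case_prod_unfold)
      show "dual_act rc rho h f = (\<Sum>(y, c)\<leftarrow>xs. dual_ract y (f c))"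
      proof
        fix m
        have "dual_act rc rho h f m = \<Psi> m"
          by (simp add: dual_act_def \<Psi>_def \<phi>_def)
        also have "\<dots> = \<Psi> (\<Sum>(e,g)\<leftarrow>ps. lm (g m) e)" using ps(2) by metis
        also have "\<dots> = (\<Sum>(e,g)\<leftarrow>ps. g m * \<Psi> e)" by (rule lin_sum[OF Padd Plin])
        also have "\<dots> = (\<Sum>(y, c)\<leftarrow>xs. dual_ract y (f c)) m"
          by (simp add: xs_def sum_list_fun_apply dual_ract_def Pcs case_prod_unfold o_def)
        finally show "dual_act rc rho h f m = (\<Sum>(y, c)\<leftarrow>xs. dual_ract y (f c)) m" .
      qed
    qed
  qed
qed

lemma sum_list_zero_aux: "(\<forall>x\<in>set l. g x = (0::'a::monoid_add)) \<Longrightarrow> sum_list (map g l) = 0"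
  by (induction l) auto

lemma sum_list_cong_aux: "(\<forall>x\<in>set l. g x = g' x) \<Longrightarrow> sum_list (map g l) = sum_list (map g' l)"
  by (induction l) auto

lemma part_ii:
  fixes lc :: "'r::ring_1 \<Rightarrow> 'c::ab_group_add \<Rightarrow> 'c" and lm :: "'r \<Rightarrow> 'm::ab_group_add \<Rightarrow> 'm"
    and ln :: "'r \<Rightarrow> 'n::ab_group_add \<Rightarrow> 'n"
  assumes cor: "coring lc rc Delta eps" and alpha: "locally_projective lc"
    and comM: "left_comodule lc rc Delta eps lm rhoM"
    and comN: "left_comodule lc rc Delta eps ln rhoN"
    and ci: "comodule_map_to_C lc rc Delta lm rhoM i"
    and cj: "comodule_map_to_C lc rc Delta ln rhoN j"
    and b: "bij (\<lambda>(m, n). i m + j n)"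
  shows "rational (ldual lm) (dual_act rc rhoM) dual_ract (ldual lc) \<longleftrightarrow> fin_gen lm"
proof -
  have bim: "bimod lc rc" using cor by (simp add: coring_def)
  have rmc: "rmod rc" and lmc: "lmod lc" using bim by (auto simp: bimod_def)
  have rc_add1: "\<And>x y r. rc (x + y) r = rc x r + rc y r"
    and rc_add2: "\<And>x r s. rc x (r + s) = rc x r + rc x s"
    and rc_mult: "\<And>x r s. rc x (r * s) = rc (rc x r) s" using rmc by (auto simp: rmod_def)
  have lc_add: "\<And>r x y. lc r (x + y) = lc r x + lc r y"
    and lc_add2: "\<And>r s x. lc (r + s) x = lc r x + lc s x"
    and lc_mult: "\<And>r s x. lc (r * s) x = lc r (lc s x)" using lmc by (auto simp: lmod_def)
  have lc_zero: "\<And>x. lc 0 x = 0" using lc_add2[of 0 0] by simp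
  have eps_add: "\<And>x y. eps (x + y) = eps x + eps y" and eps_lin: "\<And>r x. eps (lc r x) = r * eps x"
    and counit: "\<And>x. (\<Sum>(a, b)\<leftarrow>Delta x. rc a (eps b)) = x"
    using cor by (auto simp: coring_def)
  have lmm: "lmod lm" using comM by (simp add: left_comodule_def)
  have lm_add: "\<And>r x y. lm r (x + y) = lm r x + lm r y" using lmm by (auto simp: lmod_def)
  have lnn: "lmod ln" using comN by (simp add: left_comodule_def)
  have ln_add: "\<And>r x y. ln r (x + y) = ln r x + ln r y" using lnn by (auto simp: lmod_def)
  have i_add: "\<And>x y. i (x + y) = i x + i y" and i_lin: "\<And>r x. i (lm r x) = lc r (i x)"
    and i_co: "\<And>x. teq rc lc (Delta (i x)) (map (\<lambda>(c, m). (c, i m)) (rhoM x))"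
    using ci by (auto simp: comodule_map_to_C_def)
  have j_add: "\<And>x y. j (x + y) = j x + j y" and j_lin: "\<And>r x. j (ln r x) = lc r (j x)"
    using cj by (auto simp: comodule_map_to_C_def)
  define F where "F = (\<lambda>(m, n). i m + j n)"
  define p where "p c = fst (inv F c)" for c
  define q where "q c = snd (inv F c)" for c
  have bF: "bij F" using b by (simp add: F_def)
  have decomp: "i (p c) + j (q c) = c" for c
  proof -
    have "F (inv F c) = c" using bF by (simp add: bij_is_surj surj_f_inv_f)
    then show ?thesis by (simp add: F_def p_def q_def case_prod_unfold)
  qed
  have p_eq: "p (i m + j n) = m" for m n
  proof -
    have "inv F (F (m, n)) = (m, n)" using bF by (simp add: bij_is_inj)
    then show ?thesis by (simp add: F_def p_def)
  qed
  have p_add: "p (x + y) = p x + p y" for x y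
  proof -
    have "i (p x + p y) + j (q x + q y) = (i (p x) + j (q x)) + (i (p y) + j (q y))"
      by (simp add: i_add j_add algebra_simps)
    then have "x + y = i (p x + p y) + j (q x + q y)" by (simp add: decomp)
    then show ?thesis by (metis p_eq)
  qed
  have p_lin: "p (lc r c) = lm r (p c)" for r c
  proof -
    have "lc r c = i (lm r (p c)) + j (ln r (q c))"
      by (simp add: i_lin j_lin lc_add[symmetric] decomp)
    then show ?thesis by (metis p_eq)
  qed
  have p_i: "p (i m) = m" for m
    using p_eq[of m 0] additive_zero[of j, OF j_add] by simp
  show ?thesis
  proof
    assume rat: "rational (ldual lm) (dual_act rc rhoM) dual_ract (ldual lc)"
    define h where "h m = eps (i m)" for m
    have h: "h \<in> ldual lm" by (simp add: ldual_def h_def i_add eps_add i_lin eps_lin)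
    obtain xs where xs: "\<forall>f\<in>ldual lc. dual_act rc rhoM h f = (\<Sum>(y, c)\<leftarrow>xs. dual_ract y (f c))"
      using rat h unfolding rational_def by blast
    have im: "i m = (\<Sum>(y, c)\<leftarrow>xs. lc (y m) c)" for m
    proof -
      have key: "f (i m) = (\<Sum>(y, c)\<leftarrow>xs. y m * f c)" if f: "f \<in> ldual lc" for f
      proof -
        have f_add: "\<And>x y. f (x+y) = f x + f y" and f_lin: "\<And>r x. f (lc r x) = r * f x"
          using f by (auto simp: ldual_def)
        define \<phi> where "\<phi> = (\<lambda>(a,b). f (rc a (eps b)))"
        have A1: "\<And>a a' b. \<phi> (a+a', b) = \<phi> (a,b) + \<phi> (a',b)"
          by (simp add: \<phi>_def rc_add1 f_add)
        have A2: "\<And>a b b'. \<phi> (a, b+b') = \<phi> (a,b) + \<phi> (a,b')"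
          by (simp add: \<phi>_def rc_add2 f_add eps_add)
        have A3: "\<And>a r b. \<phi> (rc a r, b) = \<phi> (a, lc r b)"
          by (simp add: \<phi>_def rc_mult eps_lin)
        have "dual_act rc rhoM h f m = (\<Sum>p\<leftarrow>map (\<lambda>(c, m). (c, i m)) (rhoM m). \<phi> p)"
          by (simp add: dual_act_def h_def \<phi>_def case_prod_unfold o_def)
        also have "\<dots> = (\<Sum>p\<leftarrow>Delta (i m). \<phi> p)"
          using teq_sum[OF i_co A1 A2 A3] by simp
        also have "\<dots> = f (\<Sum>(a, b)\<leftarrow>Delta (i m). rc a (eps b))"
          by (simp add: sum_list_hom[OF f_add] \<phi>_def case_prod_unfold)
        also have "\<dots> = f (i m)" by (simp add: counit)
        finally have "f (i m) = dual_act rc rhoM h f m" ..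
        also have "\<dots> = (\<Sum>(y, c)\<leftarrow>xs. y m * f c)"
          using xs f by (simp add: sum_list_fun_apply dual_ract_def case_prod_unfold)
        finally show ?thesis .
      qed
      define d where "d = i m - (\<Sum>(y, c)\<leftarrow>xs. lc (y m) c)"
      have fd: "f d = 0" if f: "f \<in> ldual lc" for f
      proof -
        have f_add: "\<And>x y. f (x+y) = f x + f y" and f_lin: "\<And>r x. f (lc r x) = r * f x"
          using f by (auto simp: ldual_def)
        show ?thesis unfolding d_def
          by (simp add: additive_minus[OF f_add] sum_list_hom[OF f_add] key[OF f]
              case_prod_unfold f_lin)
      qed
      obtain ps where ps: "\<forall>(e, f)\<in>set ps. f \<in> ldual lc" "\<forall>x\<in>{d}. x = (\<Sum>(e, f)\<leftarrow>ps. lc (f x) e)"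
        using alpha unfolding locally_projective_def by (metis finite.emptyI finite.insertI)
      have "d = (\<Sum>(e, f)\<leftarrow>ps. lc (f d) e)" using ps(2) by simp
      also have "\<dots> = 0" using ps(1) by (intro sum_list_zero_aux) (auto simp: fd lc_zero)
      finally show ?thesis by (simp add: d_def)
    qed
    show "fin_gen lm" unfolding fin_gen_def
    proof (intro exI[of _ "map (\<lambda>(y,c). p c) xs"] allI)
      fix m
      have z: "zip (map (\<lambda>(y,c). y m) xs) (map (\<lambda>(y,c). p c) xs) = map (\<lambda>(y,c). (y m, p c)) xs"
        by (induction xs) auto
      have "m = p (i m)" by (simp add: p_i)
      also have "\<dots> = (\<Sum>(y, c)\<leftarrow>xs. lm (y m) (p c))"
        by (subst im) (simp add: sum_list_hom[OF p_add] case_prod_unfold p_lin)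
      finally have "m = (\<Sum>(r, e)\<leftarrow>zip (map (\<lambda>(y,c). y m) xs) (map (\<lambda>(y,c). p c) xs). lm r e)"
        unfolding z by (simp add: case_prod_unfold o_def)
      then show "\<exists>rs. length rs = length (map (\<lambda>(y,c). p c) xs) \<and>
          m = (\<Sum>(r, e)\<leftarrow>zip rs (map (\<lambda>(y,c). p c) xs). lm r e)"
        by (intro exI[of _ "map (\<lambda>(y,c). y m) xs"]) simp
    qed
  next
    assume "fin_gen lm"
    then obtain es where es: "\<forall>x. \<exists>rs. length rs = length es \<and> x = (\<Sum>(r, e)\<leftarrow>zip rs es. lm r e)"
      unfolding fin_gen_def by blast
    obtain ps where ps: "\<forall>(e, f)\<in>set ps. f \<in> ldual lc"
      "\<forall>x\<in>i ` set es. x = (\<Sum>(e, f)\<leftarrow>ps. lc (f x) e)"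
      using alpha unfolding locally_projective_def by blast
    define G where "G x = (\<Sum>(e, g)\<leftarrow>ps. lc (g x) e)" for x
    have G_add: "G (x + y) = G x + G y" for x y
    proof -
      have "G (x + y) = (\<Sum>(e, g)\<leftarrow>ps. lc (g x) e + lc (g y) e)"
        unfolding G_def using ps(1)
        by (intro sum_list_cong_aux) (auto simp: ldual_def lc_add2)
      then show ?thesis by (simp add: G_def sum_list_addf case_prod_unfold)
    qed
    have G_lin: "G (lc r x) = lc r (G x)" for r x
    proof -
      have "G (lc r x) = (\<Sum>(e, g)\<leftarrow>ps. lc r (lc (g x) e))"
        unfolding G_def using ps(1)
        by (intro sum_list_cong_aux) (auto simp: ldual_def lc_mult)
      then show ?thesis by (simp add: G_def sum_list_hom[of "lc r", OF lc_add] case_prod_unfold)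
    qed
    have Gi: "G (i m) = i m" for m
    proof -
      obtain rs where rs: "m = (\<Sum>(r, e)\<leftarrow>zip rs es. lm r e)" using es by blast
      have im: "i m = (\<Sum>(r, e)\<leftarrow>zip rs es. lc r (i e))"
        by (subst rs) (simp add: sum_list_hom[OF i_add] case_prod_unfold i_lin)
      have "G (i m) = (\<Sum>(r, e)\<leftarrow>zip rs es. lc r (G (i e)))"
        by (subst im) (simp add: sum_list_hom[OF G_add] case_prod_unfold G_lin)
      also have "\<dots> = (\<Sum>(r, e)\<leftarrow>zip rs es. lc r (i e))"
        using ps(2) by (intro sum_list_cong_aux) (auto simp: G_def dest!: set_zip_rightD)
      finally show ?thesis using im by simp
    qed
    have "fg_projective lm" unfolding fg_projective_def
    proof (intro exI[of _ "map (\<lambda>(e, g). (p e, \<lambda>x. g (i x))) ps"] conjI allI)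
      show "\<forall>(e, f)\<in>set (map (\<lambda>(e, g). (p e, \<lambda>x. g (i x))) ps). f \<in> ldual lm"
        using ps(1) by (auto simp: ldual_def i_add i_lin)
      fix x
      have "x = p (G (i x))" by (simp add: Gi p_i)
      also have "\<dots> = (\<Sum>(e, g)\<leftarrow>ps. lm (g (i x)) (p e))"
        by (simp add: G_def sum_list_hom[OF p_add] case_prod_unfold p_lin)
      finally show "x = (\<Sum>(e, f)\<leftarrow>map (\<lambda>(e, g). (p e, \<lambda>x. g (i x))) ps. lm (f x) e)"
        by (simp add: case_prod_unfold o_def)
    qed
    then show "rational (ldual lm) (dual_act rc rhoM) dual_ract (ldual lc)"
      by (rule part_i[OF cor comM])
  qed
qed


theorem lemma2p5:
  fixes lc :: "'r::ring_1 \<Rightarrow> 'c::ab_group_add \<Rightarrow> 'c" and rc :: "'c \<Rightarrow> 'r \<Rightarrow> 'c"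
    and Delta :: "'c \<Rightarrow> ('c \<times> 'c) list" and eps :: "'c \<Rightarrow> 'r"
  assumes coring: "coring lc rc Delta eps"
    and alpha: "locally_projective lc"
  shows "(\<forall>(lm :: 'r \<Rightarrow> 'm::ab_group_add \<Rightarrow> 'm) rho.
            left_comodule lc rc Delta eps lm rho \<and> fg_projective lm
            \<longrightarrow> rational (ldual lm) (dual_act rc rho) dual_ract (ldual lc))
       \<and> (\<forall>(lm :: 'r \<Rightarrow> 'm2::ab_group_add \<Rightarrow> 'm2) rhoM (ln :: 'r \<Rightarrow> 'n::ab_group_add \<Rightarrow> 'n) rhoN i j.
            left_comodule lc rc Delta eps lm rhoM \<and> left_comodule lc rc Delta eps ln rhoN
            \<and> comodule_map_to_C lc rc Delta lm rhoM i \<and> comodule_map_to_C lc rc Delta ln rhoN j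
            \<and> bij (\<lambda>(m, n). i m + j n)
            \<longrightarrow> (rational (ldual lm) (dual_act rc rhoM) dual_ract (ldual lc) \<longleftrightarrow> fin_gen lm))"
proof (intro conjI allI impI)
  fix lm :: "'r \<Rightarrow> 'm::ab_group_add \<Rightarrow> 'm" and rho
  assume "left_comodule lc rc Delta eps lm rho \<and> fg_projective lm"
  then show "rational (ldual lm) (dual_act rc rho) dual_ract (ldual lc)"
    using part_i[OF coring] by blast
next
  fix lm :: "'r \<Rightarrow> 'm2::ab_group_add \<Rightarrow> 'm2" and rhoM and ln :: "'r \<Rightarrow> 'n::ab_group_add \<Rightarrow> 'n" and rhoN i j
  assume "left_comodule lc rc Delta eps lm rhoM \<and> left_comodule lc rc Delta eps ln rhoN
            \<and> comodule_map_to_C lc rc Delta lm rhoM i \<and> comodule_map_to_C lc rc Delta ln rhoN j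
            \<and> bij (\<lambda>(m, n). i m + j n)"
  then show "rational (ldual lm) (dual_act rc rhoM) dual_ract (ldual lc) \<longleftrightarrow> fin_gen lm"
    using part_ii[OF coring alpha] by blast
qed

end
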